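(* Let $R$ be an integral domain, $M$ a maximal ideal of $R[X]$, and $P = M\cap R$. Then $M$ is power stable if and only if $P^{(t)} = P^t$ for all $t\geq 1$, i.e. if and only if $P^t$ is $P$-primary for every $t\geq 1$.
   Context: An ideal $I$ of the polynomial ring $R[X]$ over an integral domain $R$ is called power stable if $I^t\cap R = (I\cap R)^t$ for all integers $t\geq 1$. For a prime ideal $P$ of $R$, $P^{(t)} = P^tR_P\cap R$ is the $t$-th symbolic power. *)

theory Defs
  imports "HOL-Computational_Algebra.Polynomial"
begin

definition is_ideal :: "'a::comm_ring_1 set \<Rightarrow> bool" where
  "is_ideal I \<longleftrightarrow> 0 \<in> I \<and> (\<forall>x\<in>I. \<forall>y\<in>I. x + y \<in> I) \<and> (\<forall>r. \<forall>x\<in>I. r * x \<in> I)"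

definition ideal_gen :: "'a::comm_ring_1 set \<Rightarrow> 'a set" where
  "ideal_gen S = \<Inter>{I. is_ideal I \<and> S \<subseteq> I}"

definition ideal_mult :: "'a::comm_ring_1 set \<Rightarrow> 'a set \<Rightarrow> 'a set" where
  "ideal_mult I J = ideal_gen {x * y | x y. x \<in> I \<and> y \<in> J}"

primrec ideal_pow :: "'a::comm_ring_1 set \<Rightarrow> nat \<Rightarrow> 'a set" where
  "ideal_pow I 0 = UNIV"
| "ideal_pow I (Suc n) = ideal_mult (ideal_pow I n) I"

definition prime_ideal :: "'a::comm_ring_1 set \<Rightarrow> bool" where
  "prime_ideal P \<longleftrightarrow> is_ideal P \<and> P \<noteq> UNIV \<and> (\<forall>x y. x * y \<in> P \<longrightarrow> x \<in> P \<or> y \<in> P)"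

definition maximal_ideal :: "'a::comm_ring_1 set \<Rightarrow> bool" where
  "maximal_ideal M \<longleftrightarrow> is_ideal M \<and> M \<noteq> UNIV \<and>
     (\<forall>J. is_ideal J \<and> M \<subseteq> J \<longrightarrow> J = M \<or> J = UNIV)"

definition radical :: "'a::comm_ring_1 set \<Rightarrow> 'a set" where
  "radical I = {x. \<exists>n. x ^ n \<in> I}"

definition primary_ideal :: "'a::comm_ring_1 set \<Rightarrow> bool" where
  "primary_ideal Q \<longleftrightarrow> is_ideal Q \<and> Q \<noteq> UNIV \<and>
     (\<forall>x y. x * y \<in> Q \<longrightarrow> x \<in> Q \<or> y \<in> radical Q)"

definition P_primary :: "'a::comm_ring_1 set \<Rightarrow> 'a set \<Rightarrow> bool" where
  "P_primary P Q \<longleftrightarrow> primary_ideal Q \<and> radical Q = P"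

text \<open>Contraction I \<inter> R of an ideal I of R[X] to R (R identified with the constants).\<close>
definition contract :: "'a::comm_ring_1 poly set \<Rightarrow> 'a set" where
  "contract I = {a. [:a:] \<in> I}"

definition power_stable :: "'a::comm_ring_1 poly set \<Rightarrow> bool" where
  "power_stable I \<longleftrightarrow> (\<forall>t\<ge>1. contract (ideal_pow I t) = ideal_pow (contract I) t)"

text \<open>Symbolic power P^(t) = P^t R_P \<inter> R, for a prime P of an integral domain R.
  Unfolded: a \<in> R lies in P^t R_P iff s*a \<in> P^t for some s \<notin> P.\<close>
definition symbolic_power :: "'a::idom set \<Rightarrow> nat \<Rightarrow> 'a set" where
  "symbolic_power P t = {a. \<exists>s. s \<notin> P \<and> s * a \<in> ideal_pow P t}"

end

theory Submission
  imports Defs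
begin



lemma ideal_gen_ideal: "is_ideal (ideal_gen S)"
  unfolding ideal_gen_def is_ideal_def by auto

lemma ideal_gen_sub: "S \<subseteq> ideal_gen S"
  unfolding ideal_gen_def by auto

lemma ideal_gen_least: "is_ideal I \<Longrightarrow> S \<subseteq> I \<Longrightarrow> ideal_gen S \<subseteq> I"
  unfolding ideal_gen_def by auto

lemma ideal_UNIV: "is_ideal UNIV" unfolding is_ideal_def by auto

lemma ideal_pow_ideal: "is_ideal (ideal_pow I n)"
  by (cases n) (auto simp: ideal_UNIV ideal_mult_def ideal_gen_ideal)

lemma ideal_mult_mem: "x \<in> I \<Longrightarrow> y \<in> J \<Longrightarrow> x * y \<in> ideal_mult I J"
proof -
  assume "x \<in> I" "y \<in> J"
  then have "x * y \<in> {x * y | x y. x \<in> I \<and> y \<in> J}" by blast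
  then show ?thesis unfolding ideal_mult_def by (rule subsetD[OF ideal_gen_sub])
qed

lemma ideal_0: "is_ideal I \<Longrightarrow> 0 \<in> I" unfolding is_ideal_def by blast
lemma ideal_add: "is_ideal I \<Longrightarrow> x \<in> I \<Longrightarrow> y \<in> I \<Longrightarrow> x + y \<in> I" unfolding is_ideal_def by blast
lemma ideal_lmult: "is_ideal I \<Longrightarrow> x \<in> I \<Longrightarrow> r * x \<in> I" unfolding is_ideal_def by blast
lemma ideal_rmult: "is_ideal I \<Longrightarrow> x \<in> I \<Longrightarrow> x * r \<in> I"
  using ideal_lmult[of I x r] by (simp only: mult.commute)
lemma ideal_uminus: "is_ideal I \<Longrightarrow> x \<in> I \<Longrightarrow> - x \<in> I"
  using ideal_lmult[of I x "-1"] by (simp only: mult_minus1)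
lemma ideal_diff: "is_ideal I \<Longrightarrow> x \<in> I \<Longrightarrow> y \<in> I \<Longrightarrow> x - y \<in> I"
  using ideal_add[of I x "-y"] ideal_uminus[of I y] by (simp only: diff_conv_add_uminus)
lemma ideal_sum: "is_ideal I \<Longrightarrow> (\<And>i. i \<in> A \<Longrightarrow> f i \<in> I) \<Longrightarrow> sum f A \<in> I"
proof (induction A rule: infinite_finite_induct)
  case (infinite A) then show ?case by (simp add: ideal_0)
next
  case empty then show ?case by (simp add: ideal_0)
next
  case (insert x F) then show ?case by (simp add: ideal_add)
qed

lemma ideal_one: "is_ideal I \<Longrightarrow> 1 \<in> I \<Longrightarrow> I = UNIV"
proof -
  assume a: "is_ideal I" "1 \<in> I"
  have "x \<in> I" for x using ideal_lmult[OF a, of x] by simp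
  then show ?thesis by blast
qed

lemma ideal_pow_mult:
  assumes "is_ideal I" "x \<in> ideal_pow I a" "y \<in> ideal_pow I b"
  shows "x * y \<in> ideal_pow I (a + b)"
  using assms(3)
proof (induction b arbitrary: y)
  case 0 then show ?case using ideal_rmult[OF ideal_pow_ideal assms(2)] by simp
next
  case (Suc b)
  let ?J = "{y. x * y \<in> ideal_pow I (a + Suc b)}"
  have K: "is_ideal (ideal_pow I (a + Suc b))" by (rule ideal_pow_ideal)
  have "is_ideal ?J" unfolding is_ideal_def
  proof (intro conjI ballI allI)
    show "0 \<in> ?J" using ideal_0[OF K] by simp
    fix y1 y2 assume "y1 \<in> ?J" "y2 \<in> ?J"
    then show "y1 + y2 \<in> ?J" using ideal_add[OF K] by (simp add: distrib_left)
  next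
    fix r y1 assume "y1 \<in> ?J"
    then have "r * (x * y1) \<in> ideal_pow I (a + Suc b)" using ideal_lmult[OF K] by blast
    then show "r * y1 \<in> ?J" by (simp add: mult.left_commute)
  qed
  moreover have "{u * v |u v. u \<in> ideal_pow I b \<and> v \<in> I} \<subseteq> ?J"
  proof
    fix z assume "z \<in> {u * v |u v. u \<in> ideal_pow I b \<and> v \<in> I}"
    then obtain u v where z: "z = u * v" "u \<in> ideal_pow I b" "v \<in> I" by blast
    have "x * u \<in> ideal_pow I (a + b)" using Suc.IH z by blast
    then have "(x * u) * v \<in> ideal_pow I (a + Suc b)"
      using ideal_mult_mem[OF \<open>x * u \<in> ideal_pow I (a + b)\<close> z(3)] by simp
    then show "z \<in> ?J" by (simp add: z mult.assoc)
  qed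
  ultimately show ?case using Suc.prems ideal_gen_least
    unfolding ideal_pow.simps ideal_mult_def by blast
qed

lemma ideal_pow_sub: "is_ideal I \<Longrightarrow> n \<ge> 1 \<Longrightarrow> ideal_pow I n \<subseteq> I"
proof -
  assume a: "is_ideal I" "n \<ge> 1"
  then obtain m where "n = Suc m" by (cases n) auto
  moreover have "ideal_gen {x * y |x y. x \<in> ideal_pow I m \<and> y \<in> I} \<subseteq> I"
    using a by (intro ideal_gen_least) (auto intro: ideal_lmult)
  ultimately show ?thesis by (simp add: ideal_mult_def)
qed

lemma ideal_pow_one: "is_ideal I \<Longrightarrow> ideal_pow I 1 = I"
  apply (rule antisym)
  using ideal_pow_sub apply blast
  using ideal_mult_mem[of 1 UNIV] by force

lemma pow_in_ideal_pow: "x \<in> I \<Longrightarrow> x ^ n \<in> ideal_pow I n"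
proof (induction n)
  case (Suc n)
  then have "x ^ n * x \<in> ideal_mult (ideal_pow I n) I" by (simp add: ideal_mult_mem)
  then show ?case by (simp add: mult.commute)
qed simp




lemma prime_ideal_ideal: "prime_ideal P \<Longrightarrow> is_ideal P" by (simp add: prime_ideal_def)
lemma prime_one: "prime_ideal P \<Longrightarrow> 1 \<notin> P"
  using ideal_one prime_ideal_def by blast
lemma prime_mult: "prime_ideal P \<Longrightarrow> s \<notin> P \<Longrightarrow> s' \<notin> P \<Longrightarrow> s * s' \<notin> P"
  by (auto simp: prime_ideal_def)
lemma prime_pow: "prime_ideal P \<Longrightarrow> s \<notin> P \<Longrightarrow> s ^ k \<notin> P"
  by (induction k) (auto simp: prime_one prime_mult)

lemma sym_ideal:
  fixes P :: "'a::idom set"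
  assumes "prime_ideal P" shows "is_ideal (symbolic_power P t)"
proof -
  have I: "is_ideal (ideal_pow P t)" by (rule ideal_pow_ideal)
  show ?thesis unfolding is_ideal_def symbolic_power_def
  proof (intro conjI ballI allI)
    show "0 \<in> {a. \<exists>s. s \<notin> P \<and> s * a \<in> ideal_pow P t}"
      using prime_one[OF assms] ideal_0[OF I] by (auto intro!: exI[of _ 1])
  next
    fix x y assume "x \<in> {a. \<exists>s. s \<notin> P \<and> s * a \<in> ideal_pow P t}" "y \<in> {a. \<exists>s. s \<notin> P \<and> s * a \<in> ideal_pow P t}"
    then obtain s s' where "s \<notin> P" "s * x \<in> ideal_pow P t" "s' \<notin> P" "s' * y \<in> ideal_pow P t" by auto
    moreover have "(s * s') * (x + y) = s' * (s * x) + s * (s' * y)" by (simp add: algebra_simps)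
    ultimately show "x + y \<in> {a. \<exists>s. s \<notin> P \<and> s * a \<in> ideal_pow P t}"
      using prime_mult[OF assms] ideal_add[OF I] ideal_lmult[OF I] by (auto intro!: exI[of _ "s*s'"])
  next
    fix r x assume "x \<in> {a. \<exists>s. s \<notin> P \<and> s * a \<in> ideal_pow P t}"
    then obtain s where "s \<notin> P" "s * x \<in> ideal_pow P t" by auto
    then show "r * x \<in> {a. \<exists>s. s \<notin> P \<and> s * a \<in> ideal_pow P t}"
      using ideal_lmult[OF I, of "s*x" r] by (auto simp: mult.left_commute)
  qed
qed

lemma sym_sat:
  fixes P :: "'a::idom set"
  assumes "prime_ideal P" "w \<notin> P" "w * c \<in> symbolic_power P t"
  shows "c \<in> symbolic_power P t"
proof -
  obtain s where "s \<notin> P" "s * (w * c) \<in> ideal_pow P t" using assms(3) by (auto simp: symbolic_power_def)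
  then show ?thesis using prime_mult[OF assms(1) _ assms(2)] unfolding symbolic_power_def
    by (auto simp: mult.assoc intro!: exI[of _ "s * w"])
qed

lemma sym_zero: "prime_ideal (P::'a::idom set) \<Longrightarrow> symbolic_power P 0 = UNIV"
  using prime_one by (auto simp: symbolic_power_def intro!: exI[of _ 1])

lemma pow_sub_sym: "prime_ideal (P::'a::idom set) \<Longrightarrow> ideal_pow P t \<subseteq> symbolic_power P t"
  using prime_one by (auto simp: symbolic_power_def intro!: exI[of _ 1])

lemma sym_one_sub: "prime_ideal (P::'a::idom set) \<Longrightarrow> P \<subseteq> symbolic_power P 1"
  using pow_sub_sym[of P 1] ideal_pow_one prime_ideal_ideal by blast

lemma sym_mult:
  fixes P :: "'a::idom set"
  assumes "prime_ideal P" "x \<in> symbolic_power P a" "y \<in> symbolic_power P b"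
  shows "x * y \<in> symbolic_power P (a + b)"
proof -
  obtain s s' where "s \<notin> P" "s * x \<in> ideal_pow P a" "s' \<notin> P" "s' * y \<in> ideal_pow P b"
    using assms by (auto simp: symbolic_power_def)
  moreover have "(s * s') * (x * y) = (s * x) * (s' * y)" by (simp add: algebra_simps)
  moreover have "(s * x) * (s' * y) \<in> ideal_pow P (a + b)"
    using ideal_pow_mult[OF prime_ideal_ideal[OF assms(1)]] calculation by blast
  ultimately have "s * s' \<notin> P \<and> (s * s') * (x * y) \<in> ideal_pow P (a + b)"
    using prime_mult[OF assms(1)] by metis
  then show ?thesis unfolding symbolic_power_def by blast
qed

definition coeffs_in :: "'a::comm_ring_1 set \<Rightarrow> 'a poly \<Rightarrow> bool" where
  "coeffs_in Q h \<longleftrightarrow> (\<forall>i. coeff h i \<in> Q)"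

lemma coeffs_in_mult:
  assumes "is_ideal Q3" "coeffs_in Q1 h" "coeffs_in Q2 g" "\<And>x y. x \<in> Q1 \<Longrightarrow> y \<in> Q2 \<Longrightarrow> x * y \<in> Q3"
  shows "coeffs_in Q3 (h * g)"
  unfolding coeffs_in_def coeff_mult
proof
  fix n
  show "(\<Sum>i\<le>n. coeff h i * coeff g (n - i)) \<in> Q3"
    by (rule ideal_sum[OF assms(1)]) (use assms(2,3,4) in \<open>auto simp: coeffs_in_def\<close>)
qed

lemma coeffs_in_multL: "is_ideal Q \<Longrightarrow> coeffs_in Q h \<Longrightarrow> coeffs_in Q (g * h)"
  using coeffs_in_mult[of Q UNIV g Q h] by (auto simp: coeffs_in_def ideal_lmult)

lemma coeffs_in_multR: "is_ideal Q \<Longrightarrow> coeffs_in Q h \<Longrightarrow> coeffs_in Q (h * g)"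
  using coeffs_in_multL[of Q h g] by (simp add: mult.commute)

lemma coeffs_in_add: "is_ideal Q \<Longrightarrow> coeffs_in Q h \<Longrightarrow> coeffs_in Q g \<Longrightarrow> coeffs_in Q (h + g)"
  by (auto simp: coeffs_in_def ideal_add)
lemma coeffs_in_diff: "is_ideal Q \<Longrightarrow> coeffs_in Q h \<Longrightarrow> coeffs_in Q g \<Longrightarrow> coeffs_in Q (h - g)"
  by (auto simp: coeffs_in_def ideal_diff)
lemma coeffs_in_0: "is_ideal Q \<Longrightarrow> coeffs_in Q 0"
  by (auto simp: coeffs_in_def ideal_0)
lemma coeffs_in_mono: "Q \<subseteq> Q' \<Longrightarrow> coeffs_in Q h \<Longrightarrow> coeffs_in Q' h"
  by (auto simp: coeffs_in_def)




fun Iset :: "'a::idom set \<Rightarrow> 'a poly \<Rightarrow> nat \<Rightarrow> 'a poly set" where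
  "Iset P f 0 = UNIV"
| "Iset P f (Suc t) = {h + f * g | h g. coeffs_in (symbolic_power P (Suc t)) h \<and> g \<in> Iset P f t}"

lemma Iset_SucI: "coeffs_in (symbolic_power P (Suc t)) h \<Longrightarrow> g \<in> Iset P f t \<Longrightarrow> h + f * g \<in> Iset P f (Suc t)"
  by auto

definition Sat :: "'a::idom set \<Rightarrow> 'a poly set \<Rightarrow> 'a poly set" where
  "Sat P I = {g. \<exists>s. s \<notin> P \<and> [:s:] * g \<in> I}"

lemma Iset_ideal:
  assumes "prime_ideal P" shows "is_ideal (Iset P f t)"
proof (induction t)
  case 0 then show ?case by (simp add: ideal_UNIV)
next
  case (Suc t)
  note Q = sym_ideal[OF assms, of "Suc t"]
  show ?case unfolding is_ideal_def
  proof (intro conjI ballI allI)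
    show "0 \<in> Iset P f (Suc t)" using Iset_SucI[OF coeffs_in_0[OF Q] ideal_0[OF Suc]] by simp
  next
    fix x y assume "x \<in> Iset P f (Suc t)" "y \<in> Iset P f (Suc t)"
    then obtain h g h' g' where "x = h + f * g" "y = h' + f * g'"
      "coeffs_in (symbolic_power P (Suc t)) h" "coeffs_in (symbolic_power P (Suc t)) h'"
      "g \<in> Iset P f t" "g' \<in> Iset P f t" by auto
    moreover have "x + y = (h + h') + f * (g + g')" using calculation by (simp add: algebra_simps)
    ultimately show "x + y \<in> Iset P f (Suc t)"
      using Iset_SucI[OF coeffs_in_add[OF Q] ideal_add[OF Suc]] by metis
  next
    fix r x assume "x \<in> Iset P f (Suc t)"
    then obtain h g where "x = h + f * g"
      "coeffs_in (symbolic_power P (Suc t)) h" "g \<in> Iset P f t" by auto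
    moreover have "r * x = r * h + f * (r * g)" using calculation by (simp add: algebra_simps)
    ultimately show "r * x \<in> Iset P f (Suc t)"
      using Iset_SucI[OF coeffs_in_multL[OF Q] ideal_lmult[OF Suc]] by metis
  qed
qed

lemma Iset_f: "prime_ideal P \<Longrightarrow> g \<in> Iset P f t \<Longrightarrow> f * g \<in> Iset P f (Suc t)"
proof -
  assume a: "prime_ideal P" "g \<in> Iset P f t"
  have "coeffs_in (symbolic_power P (Suc t)) 0" using coeffs_in_0[OF sym_ideal[OF a(1)]] .
  from Iset_SucI[OF this a(2)] show ?thesis by simp
qed

lemma Iset_mult1:
  assumes "prime_ideal P"
  shows "G \<in> Iset P f t \<Longrightarrow> coeffs_in (symbolic_power P 1) g \<Longrightarrow> G * g \<in> Iset P f (Suc t)"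
proof (induction t arbitrary: G)
  case 0
  then have "coeffs_in (symbolic_power P 1) (G * g)"
    using coeffs_in_multL[OF sym_ideal[OF assms]] by blast
  then have "coeffs_in (symbolic_power P (Suc 0)) (G * g)" by simp
  from Iset_SucI[OF this, where g=0 and f=f] show ?case by simp
next
  case (Suc t)
  then obtain h G1 where G: "G = h + f * G1"
      "coeffs_in (symbolic_power P (Suc t)) h" "G1 \<in> Iset P f t" by auto
  have "coeffs_in (symbolic_power P (Suc (Suc t))) (h * g)"
    using coeffs_in_mult[OF sym_ideal[OF assms] G(2) Suc.prems(2)] sym_mult[OF assms] by fastforce
  moreover have "G1 * g \<in> Iset P f (Suc t)" using Suc.IH G(3) Suc.prems(2) by blast
  moreover have "G * g = h * g + f * (G1 * g)" using G by (simp add: algebra_simps)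
  ultimately show ?case using Iset_SucI by metis
qed

lemma Iset_mult:
  assumes "prime_ideal P" "G \<in> Iset P f t" "G' \<in> Iset P f 1"
  shows "G * G' \<in> Iset P f (Suc t)"
proof -
  obtain h g where G': "G' = h + f * g" "coeffs_in (symbolic_power P 1) h" using assms(3) by auto
  have "G * h \<in> Iset P f (Suc t)" using Iset_mult1[OF assms(1,2) G'(2)] .
  moreover have "f * (G * g) \<in> Iset P f (Suc t)"
    using Iset_f[OF assms(1)] ideal_rmult[OF Iset_ideal[OF assms(1)] assms(2)] by blast
  moreover have "G * G' = G * h + f * (G * g)" using G' by (simp add: algebra_simps)
  ultimately show ?thesis using ideal_add[OF Iset_ideal[OF assms(1)]] by metis
qed

lemma Sat_ideal:
  fixes P :: "'a::idom set"
  assumes "prime_ideal P" "is_ideal I" shows "is_ideal (Sat P I)"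
  unfolding is_ideal_def Sat_def
proof (intro conjI ballI allI)
  show "0 \<in> {g. \<exists>s. s \<notin> P \<and> [:s:] * g \<in> I}"
    using prime_one[OF assms(1)] ideal_0[OF assms(2)] by (auto intro!: exI[of _ 1])
next
  fix x y assume "x \<in> {g. \<exists>s. s \<notin> P \<and> [:s:] * g \<in> I}" "y \<in> {g. \<exists>s. s \<notin> P \<and> [:s:] * g \<in> I}"
  then obtain s s' where "s \<notin> P" "[:s:] * x \<in> I" "s' \<notin> P" "[:s':] * y \<in> I" by auto
  moreover have "[:s * s':] * (x + y) = [:s':] * ([:s:] * x) + [:s:] * ([:s':] * y)"
    by (simp add: algebra_simps smult_add_right)
  ultimately show "x + y \<in> {g. \<exists>s. s \<notin> P \<and> [:s:] * g \<in> I}"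
    using prime_mult[OF assms(1)] ideal_add[OF assms(2)] ideal_lmult[OF assms(2)]
    by (metis (mono_tags, lifting) mem_Collect_eq)
next
  fix r x assume "x \<in> {g. \<exists>s. s \<notin> P \<and> [:s:] * g \<in> I}"
  then obtain s where "s \<notin> P" "[:s:] * x \<in> I" by auto
  then show "r * x \<in> {g. \<exists>s. s \<notin> P \<and> [:s:] * g \<in> I}"
    using ideal_lmult[OF assms(2), of "[:s:] * x" r] by (auto simp: mult.left_commute)
qed

lemma Sat_mult:
  fixes P :: "'a::idom set"
  assumes "prime_ideal P" "x \<in> Sat P (Iset P f t)" "y \<in> Sat P (Iset P f 1)"
  shows "x * y \<in> Sat P (Iset P f (Suc t))"
proof -
  obtain s s' where "s \<notin> P" "[:s:] * x \<in> Iset P f t" "s' \<notin> P" "[:s':] * y \<in> Iset P f 1"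
    using assms by (auto simp: Sat_def)
  moreover have "[:s * s':] * (x * y) = ([:s:] * x) * ([:s':] * y)"
    by (simp add: algebra_simps)
  ultimately show ?thesis unfolding Sat_def
    using prime_mult[OF assms(1)] Iset_mult[OF assms(1)]
    by (metis (mono_tags, lifting) mem_Collect_eq)
qed

lemma Mpow_Sat:
  fixes P :: "'a::idom set"
  assumes "prime_ideal P" "M \<subseteq> Sat P (Iset P f 1)"
  shows "ideal_pow M t \<subseteq> Sat P (Iset P f t)"
proof (induction t)
  case 0 then show ?case using prime_one[OF assms(1)] by (auto simp: Sat_def intro!: exI[of _ 1])
next
  case (Suc t)
  have "ideal_gen {x * y |x y. x \<in> ideal_pow M t \<and> y \<in> M} \<subseteq> Sat P (Iset P f (Suc t))"
    apply (rule ideal_gen_least[OF Sat_ideal[OF assms(1) Iset_ideal[OF assms(1)]]])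
    using Suc assms(2) Sat_mult[OF assms(1)] by blast
  then show ?case by (simp add: ideal_mult_def)
qed




lemma coeffs_in_smult: "is_ideal Q \<Longrightarrow> coeffs_in Q h \<Longrightarrow> coeffs_in Q (smult c h)"
  by (auto simp: coeffs_in_def ideal_lmult)

lemma coeffs_in_monom: "is_ideal Q \<Longrightarrow> c \<in> Q \<Longrightarrow> coeffs_in Q (monom c m)"
  by (auto simp: coeffs_in_def coeff_monom ideal_0)

lemma pdiv:
  fixes f :: "'a::idom poly"
  assumes Q: "is_ideal Q" and d: "degree f \<ge> 1"
  shows "coeffs_in Q h \<Longrightarrow> \<exists>k q r. smult (lead_coeff f ^ k) h = q * f + r \<and> coeffs_in Q q \<and> coeffs_in Q r \<and> degree r < degree f"
proof (induction "degree h" arbitrary: h rule: less_induct)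
  case less
  show ?case
  proof (cases "degree h < degree f")
    case True
    then show ?thesis using less.prems coeffs_in_0[OF Q]
      by (intro exI[of _ 0] exI[of _ 0] exI[of _ h]) auto
  next
    case False
    define n where "n = degree h"
    define u where "u = lead_coeff f"
    define c where "c = lead_coeff h"
    define h' where "h' = smult u h - monom c (n - degree f) * f"
    have nd: "n \<ge> degree f" using False n_def by simp
    have nd': "degree f \<le> degree h" using False by simp
    have cQ: "c \<in> Q" using less.prems by (simp add: coeffs_in_def c_def)
    have deg_le: "degree h' \<le> n"
      unfolding h'_def
      by (rule degree_diff_le) (auto simp: n_def nd nd' intro!: order.trans[OF degree_mult_le] order.trans[OF add_mono[OF degree_monom_le order.refl]])
    have "coeff h' n = 0"
      using nd by (simp add: h'_def coeff_monom_mult u_def c_def n_def)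
    then have "degree h' < n"
      using deg_le nd d by (cases "h' = 0") (auto simp: le_less)
    moreover have ch': "coeffs_in Q h'" unfolding h'_def
      using less.prems cQ by (intro coeffs_in_diff[OF Q] coeffs_in_smult[OF Q] coeffs_in_multR[OF Q] coeffs_in_monom[OF Q]) auto
    ultimately obtain k q r where IH: "smult (lead_coeff f ^ k) h' = q * f + r" "coeffs_in Q q" "coeffs_in Q r" "degree r < degree f"
      using less.hyps n_def by blast
    have "smult (lead_coeff f ^ Suc k) h = (q + smult (u ^ k) (monom c (n - degree f))) * f + r"
    proof -
      have "smult (lead_coeff f ^ Suc k) h = smult (u ^ k) (smult u h)" by (simp add: u_def mult.commute)
      also have "smult u h = h' + monom c (n - degree f) * f" by (simp add: h'_def)
      finally show ?thesis using IH(1) by (simp add: u_def algebra_simps smult_add_right)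
    qed
    moreover have "coeffs_in Q (q + smult (u ^ k) (monom c (n - degree f)))"
      using IH(2) cQ by (intro coeffs_in_add[OF Q] coeffs_in_smult[OF Q] coeffs_in_monom[OF Q]) auto
    ultimately show ?thesis using IH by blast
  qed
qed

lemma const_lemma:
  fixes P :: "'a::idom set" and f :: "'a poly"
  assumes P: "prime_ideal P" and d: "degree f \<ge> 1" and u: "lead_coeff f \<notin> P" and t: "t \<ge> 1"
    and c: "[:c:] \<in> Sat P (Iset P f t)"
  shows "c \<in> symbolic_power P t"
proof -
  obtain t' where t': "t = Suc t'" using t by (cases t) auto
  note Q = sym_ideal[OF P, of t]
  obtain s where s: "s \<notin> P" "[:s:] * [:c:] \<in> Iset P f t" using c unfolding Sat_def by blast
  have "[:s * c:] = [:s:] * [:c:]" by (simp add: mult.commute)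
  then have "[:s * c:] \<in> Iset P f t" using s(2) by (simp only:)
  then obtain h g where hg: "[:s * c:] = h + f * g" "coeffs_in (symbolic_power P t) h"
    using t' by auto
  obtain k q r where qr: "smult (lead_coeff f ^ k) h = q * f + r" "coeffs_in (symbolic_power P t) q"
    "coeffs_in (symbolic_power P t) r" "degree r < degree f"
    using pdiv[OF Q d hg(2)] by blast
  define w where "w = lead_coeff f ^ k * s"
  have eq: "[:w * c:] - r = f * (q + smult (lead_coeff f ^ k) g)"
  proof -
    have "[:w * c:] = smult (lead_coeff f ^ k) [:s * c:]" by (simp add: w_def mult.assoc)
    also have "\<dots> = q * f + r + f * smult (lead_coeff f ^ k) g" by (simp add: hg(1) smult_add_right qr(1))
    finally show ?thesis by (simp add: algebra_simps)
  qed
  have "q + smult (lead_coeff f ^ k) g = 0"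
  proof (rule ccontr)
    assume nz: "q + smult (lead_coeff f ^ k) g \<noteq> 0"
    have "f \<noteq> 0" using d by auto
    then have "degree (f * (q + smult (lead_coeff f ^ k) g)) \<ge> degree f"
      using nz by (simp add: degree_mult_eq)
    moreover have "degree ([:w * c:] - r) < degree f"
      using qr(4) d by (intro le_less_trans[OF degree_diff_le]) auto
    ultimately show False using eq by simp
  qed
  then have "[:w * c:] = r" using eq by simp
  then have "w * c \<in> symbolic_power P t" using qr(3) unfolding coeffs_in_def
    by (metis coeff_pCons_0)
  moreover have "w \<notin> P" unfolding w_def using prime_mult[OF P prime_pow[OF P u] s(1)] .
  ultimately show ?thesis using sym_sat[OF P] by blast
qed




lemma max_ideal: "maximal_ideal M \<Longrightarrow> is_ideal M" by (simp add: maximal_ideal_def)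

lemma max_inv:
  assumes M: "maximal_ideal M" and x: "x \<notin> M"
  shows "\<exists>r m. m \<in> M \<and> 1 = r * x + m"
proof -
  define J where "J = {r * x + m | r m. m \<in> M}"
  have I: "is_ideal M" using M by (simp add: maximal_ideal_def)
  have "is_ideal J" unfolding is_ideal_def
  proof (intro conjI ballI allI)
    show "0 \<in> J" unfolding J_def using ideal_0[OF I] by (intro CollectI exI[of _ 0]) simp
  next
    fix a b assume "a \<in> J" "b \<in> J"
    then obtain r m r' m' where "a = r * x + m" "m \<in> M" "b = r' * x + m'" "m' \<in> M"
      unfolding J_def by blast
    moreover have "a + b = (r + r') * x + (m + m')" using calculation by (simp add: algebra_simps)
    ultimately show "a + b \<in> J" unfolding J_def using ideal_add[OF I] by blast
  next
    fix c a assume "a \<in> J"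
    then obtain r m where "a = r * x + m" "m \<in> M" unfolding J_def by blast
    moreover have "c * a = (c * r) * x + c * m" using calculation by (simp add: algebra_simps)
    ultimately show "c * a \<in> J" unfolding J_def using ideal_lmult[OF I] by blast
  qed
  moreover have "M \<subseteq> J"
  proof
    fix m assume "m \<in> M" then show "m \<in> J" unfolding J_def by (intro CollectI exI[of _ 0] exI[of _ m]) simp
  qed
  moreover have "x \<in> J" unfolding J_def using ideal_0[OF I] by (intro CollectI exI[of _ 1] exI[of _ 0]) simp
  ultimately have "J = UNIV" using M x unfolding maximal_ideal_def by blast
  then have "1 \<in> J" by simp
  then show ?thesis unfolding J_def by blast
qed

lemma max_prime: assumes M: "maximal_ideal M" "x * y \<in> M" shows "x \<in> M \<or> y \<in> M"
proof (rule ccontr)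
  assume "\<not> (x \<in> M \<or> y \<in> M)"
  then obtain r m where "m \<in> M" "1 = r * x + m" "y \<notin> M" using max_inv[OF M(1)] by blast
  then have "y = r * (x * y) + m * y" by (metis mult.commute mult.left_commute distrib_right mult_1)
  moreover have "r * (x * y) \<in> M" "m * y \<in> M" using ideal_lmult ideal_rmult max_ideal[OF M(1)] M(2) \<open>m \<in> M\<close> by auto
  ultimately show False using ideal_add[OF max_ideal[OF M(1)]] \<open>y \<notin> M\<close> by metis
qed

lemma binom_split: "\<exists>q. (a + b) ^ t = a * q + b ^ (t::nat)" for a b :: "'a::comm_ring_1"
proof (induction t)
  case 0 then show ?case by (intro exI[of _ 0]) simp
next
  case (Suc t)
  then obtain q where q: "(a + b) ^ t = a * q + b ^ t" by blast
  have "(a + b) ^ Suc t = a * (q * (a + b) + b ^ t) + b ^ Suc t"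
    by (simp add: q algebra_simps)
  then show ?case by blast
qed

lemma max_primary:
  assumes M: "maximal_ideal M" and x: "x \<notin> M" and xy: "x * y \<in> ideal_pow M t"
  shows "y \<in> ideal_pow M t"
proof -
  obtain r m where rm: "m \<in> M" "1 = r * x + m" using max_inv[OF M x] by blast
  obtain q where q: "(r * x + m) ^ t = (r * x) * q + m ^ t" using binom_split by blast
  have "y = y * (r * x + m) ^ t" using rm(2) by simp
  also have "\<dots> = y * ((r * x) * q + m ^ t)" by (simp only: q)
  also have "\<dots> = (r * q) * (x * y) + y * m ^ t" by (simp add: algebra_simps)
  finally have eq: "y = (r * q) * (x * y) + y * m ^ t" .
  have K: "is_ideal (ideal_pow M t)" by (rule ideal_pow_ideal)
  have "(r * q) * (x * y) \<in> ideal_pow M t" using ideal_lmult[OF K xy] .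
  moreover have "y * m ^ t \<in> ideal_pow M t" using ideal_lmult[OF K pow_in_ideal_pow[OF rm(1)]] .
  ultimately show ?thesis using ideal_add[OF K] eq by metis
qed

lemma contract_ideal:
  assumes I: "is_ideal M" shows "is_ideal (contract M)"
  unfolding is_ideal_def contract_def
proof (intro conjI ballI allI)
  show "0 \<in> {a. [:a:] \<in> M}" using ideal_0[OF I] by simp
next
  fix x y assume "x \<in> {a. [:a:] \<in> M}" "y \<in> {a. [:a:] \<in> M}"
  then show "x + y \<in> {a. [:a:] \<in> M}" using ideal_add[OF I, of "[:x:]" "[:y:]"] by simp
next
  fix r x assume "x \<in> {a. [:a:] \<in> M}"
  then show "r * x \<in> {a. [:a:] \<in> M}" using ideal_lmult[OF I, of "[:x:]" "[:r:]"] by (simp add: mult.commute)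
qed

lemma contract_prime:
  assumes M: "maximal_ideal M" shows "prime_ideal (contract M)"
  unfolding prime_ideal_def
proof (intro conjI allI impI)
  show "is_ideal (contract M)" using contract_ideal max_ideal M by blast
  show "contract M \<noteq> UNIV"
  proof
    assume "contract M = UNIV"
    then have "1 \<in> M" unfolding contract_def by (metis UNIV_I mem_Collect_eq one_pCons)
    then show False using ideal_one max_ideal[OF M] M unfolding maximal_ideal_def by blast
  qed
  fix x y assume "x * y \<in> contract M"
  then have "[:x:] * [:y:] \<in> M" unfolding contract_def by (simp add: mult.commute)
  then show "x \<in> contract M \<or> y \<in> contract M" using max_prime[OF M] unfolding contract_def by blast
qed

lemma const_pow:
  assumes I: "is_ideal M"
  shows "a \<in> ideal_pow (contract M) t \<Longrightarrow> [:a:] \<in> ideal_pow M t"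
proof (induction t arbitrary: a)
  case 0 then show ?case by simp
next
  case (Suc t)
  let ?J = "{a. [:a:] \<in> ideal_pow M (Suc t)}"
  have K: "is_ideal (ideal_pow M (Suc t))" by (rule ideal_pow_ideal)
  have "is_ideal ?J" using contract_ideal[OF K] unfolding contract_def .
  moreover have "{x * y |x y. x \<in> ideal_pow (contract M) t \<and> y \<in> contract M} \<subseteq> ?J"
  proof
    fix z assume "z \<in> {x * y |x y. x \<in> ideal_pow (contract M) t \<and> y \<in> contract M}"
    then obtain x y where z: "z = x * y" "x \<in> ideal_pow (contract M) t" "y \<in> contract M" by blast
    have "[:x:] * [:y:] \<in> ideal_mult (ideal_pow M t) M"
      using ideal_mult_mem[OF Suc.IH[OF z(2)]] z(3) unfolding contract_def by blast
    then show "z \<in> ?J" using z(1) by (simp add: mult.commute)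
  qed
  ultimately have "ideal_gen {x * y |x y. x \<in> ideal_pow (contract M) t \<and> y \<in> contract M} \<subseteq> ?J"
    by (rule ideal_gen_least)
  then show ?case using Suc.prems by (auto simp: ideal_mult_def)
qed

lemma coeffs_in_contract:
  assumes I: "is_ideal M" and g: "coeffs_in (contract M) g" shows "g \<in> M"
proof -
  have "(\<Sum>i\<le>degree g. monom (coeff g i) i) \<in> M"
  proof (rule ideal_sum[OF I])
    fix i
    have "[:coeff g i:] \<in> M" using g unfolding coeffs_in_def contract_def by blast
    then have "[:coeff g i:] * monom 1 i \<in> M" by (rule ideal_rmult[OF I])
    then show "monom (coeff g i) i \<in> M" by (simp add: smult_monom)
  qed
  then show ?thesis by (simp add: poly_as_sum_of_monoms)
qed

lemma trunc:
  fixes g :: "'a::comm_ring_1 poly"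
  assumes I: "is_ideal P" and g: "\<not> coeffs_in P g"
  shows "\<exists>g'. coeffs_in P (g - g') \<and> lead_coeff g' \<notin> P \<and> degree g' \<le> degree g"
proof -
  define S where "S = {i. coeff g i \<notin> P}"
  have S0: "S \<noteq> {}" using g unfolding S_def coeffs_in_def by auto
  have Sfin: "S \<subseteq> {..degree g}" unfolding S_def using ideal_0[OF I]
    by (auto, metis coeff_eq_0 not_le)
  then have fin: "finite S" by (rule finite_subset) simp
  define e where "e = Max S"
  have eS: "e \<in> S" using Max_in[OF fin S0] e_def by simp
  have emax: "\<And>i. i > e \<Longrightarrow> coeff g i \<in> P" using Max_ge[OF fin] unfolding e_def S_def
    by (metis leD mem_Collect_eq)
  define g' where "g' = poly_cutoff (Suc e) g"
  have cg': "coeff g' i = (if i < Suc e then coeff g i else 0)" for i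
    unfolding g'_def by (rule coeff_poly_cutoff)
  have ce: "coeff g' e = coeff g e" using cg' by simp
  have ne: "coeff g e \<noteq> 0" using eS ideal_0[OF I] unfolding S_def by auto
  have dg': "degree g' = e"
  proof (rule antisym)
    show "degree g' \<le> e" by (rule degree_le) (simp add: cg')
    show "e \<le> degree g'" by (rule le_degree) (simp add: ce ne)
  qed
  have "coeffs_in P (g - g')" unfolding coeffs_in_def
  proof
    fix i show "coeff (g - g') i \<in> P"
      using emax[of i] ideal_0[OF I] by (cases "i \<le> e") (auto simp: cg')
  qed
  moreover have "lead_coeff g' \<notin> P" using dg' ce eS unfolding S_def by simp
  moreover have "degree g' \<le> degree g" using dg' le_degree[OF ne] by simp
  ultimately show ?thesis by blast
qed




lemma contract_pow:
  fixes M :: "'a::idom poly set"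
  assumes M: "maximal_ideal M"
  shows "contract (ideal_pow M t) = symbolic_power (contract M) t"
proof -
  define P where "P = contract M"
  have P: "prime_ideal P" unfolding P_def by (rule contract_prime[OF M])
  have IM: "is_ideal M" by (rule max_ideal[OF M])
  have IP: "is_ideal P" by (rule prime_ideal_ideal[OF P])
  have inM: "\<And>g. coeffs_in P g \<Longrightarrow> g \<in> M" using coeffs_in_contract[OF IM] unfolding P_def .
  have sup: "symbolic_power P t \<subseteq> contract (ideal_pow M t)"
  proof
    fix a assume "a \<in> symbolic_power P t"
    then obtain s where s: "s \<notin> P" "s * a \<in> ideal_pow P t" unfolding symbolic_power_def by blast
    have "[:s * a:] \<in> ideal_pow M t" using const_pow[OF IM] s(2) unfolding P_def by blast
    moreover have "[:s * a:] = [:s:] * [:a:]" by (simp add: mult.commute)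
    moreover have "[:s:] \<notin> M" using s(1) unfolding P_def contract_def by simp
    ultimately have "[:a:] \<in> ideal_pow M t" using max_primary[OF M] by metis
    then show "a \<in> contract (ideal_pow M t)" unfolding contract_def by simp
  qed
  have sub: "contract (ideal_pow M t) \<subseteq> symbolic_power P t"
  proof (cases "t = 0")
    case True then show ?thesis using sym_zero[OF P] by simp
  next
    case False
    then have t: "t \<ge> 1" by simp
    have "\<exists>g0. g0 \<in> M \<and> \<not> coeffs_in P g0"
    proof (rule ccontr)
      assume "\<not> ?thesis"
      then have all: "\<And>g. g \<in> M \<Longrightarrow> coeffs_in P g" by blast
      have "1 \<notin> P" by (rule prime_one[OF P])
      then have "\<not> coeffs_in P [:0, 1:]" unfolding coeffs_in_def by (metis coeff_pCons_0 coeff_pCons_Suc)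
      then have "[:0, 1:] \<notin> M" using all by blast
      then obtain r m where rm: "m \<in> M" "1 = r * [:0, 1:] + m" using max_inv[OF M] by blast
      have "coeff (1::'a poly) 0 = coeff (r * [:0, 1:]) 0 + coeff m 0" using rm(2) by (metis coeff_add)
      then have "coeff m 0 = 1" by simp
      then show False using all[OF rm(1)] \<open>1 \<notin> P\<close> unfolding coeffs_in_def by metis
    qed
    then obtain g0 where g0: "g0 \<in> M" "\<not> coeffs_in P g0" by blast
    obtain g' where g': "coeffs_in P (g0 - g')" "lead_coeff g' \<notin> P" using trunc[OF IP g0(2)] by blast
    have "g' = g0 - (g0 - g')" by simp
    then have "g' \<in> M" using ideal_diff[OF IM g0(1) inM[OF g'(1)]] by simp
    then obtain f where f: "f \<in> M" "lead_coeff f \<notin> P"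
      and fmin: "\<And>g. g \<in> M \<Longrightarrow> lead_coeff g \<notin> P \<Longrightarrow> degree f \<le> degree g"
      using ex_has_least_nat[of "\<lambda>g. g \<in> M \<and> lead_coeff g \<notin> P" g' degree] g'(2) by blast
    have d: "degree f \<ge> 1"
    proof (rule ccontr)
      assume "\<not> degree f \<ge> 1"
      then have "degree f = 0" by simp
      then have "[:coeff f 0:] = f" by (rule degree_0_id)
      then have "[:lead_coeff f:] \<in> M" using f(1) \<open>degree f = 0\<close> by simp
      then show False using f(2) unfolding P_def contract_def by simp
    qed
    define u where "u = lead_coeff f"
    have Msat: "M \<subseteq> Sat P (Iset P f 1)"
    proof
      fix g assume g: "g \<in> M"
      have "coeffs_in UNIV g" by (simp add: coeffs_in_def)
      then obtain k q r where qr: "smult (u ^ k) g = q * f + r" "degree r < degree f"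
        using pdiv[OF ideal_UNIV d] unfolding u_def by blast
      have req: "r = [:u ^ k:] * g - q * f" using qr(1) by (simp add: algebra_simps)
      have "[:u ^ k:] * g - q * f \<in> M"
        by (rule ideal_diff[OF IM ideal_lmult[OF IM g] ideal_lmult[OF IM f(1)]])
      then have rM: "r \<in> M" using req by (simp only:)
      have "coeffs_in P r"
      proof (rule ccontr)
        assume "\<not> coeffs_in P r"
        then obtain r' where r': "coeffs_in P (r - r')" "lead_coeff r' \<notin> P" "degree r' \<le> degree r"
          using trunc[OF IP] by blast
        have "r' = r - (r - r')" by simp
        then have "r' \<in> M" using ideal_diff[OF IM rM inM[OF r'(1)]] by simp
        then have "degree f \<le> degree r'" using fmin r'(2) by blast
        then show False using r'(3) qr(2) by simp
      qed
      then have "coeffs_in (symbolic_power P (Suc 0)) r" using sym_one_sub[OF P] coeffs_in_mono by auto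
      from Iset_SucI[OF this, of q f] have mem: "r + f * q \<in> Iset P f 1" by simp
      have eq: "[:u ^ k:] * g = r + f * q" using qr(1) by (simp add: algebra_simps)
      have uk: "u ^ k \<notin> P" using prime_pow[OF P f(2)] unfolding u_def .
      from mem have "[:u ^ k:] * g \<in> Iset P f 1" by (subst eq)
      with uk show "g \<in> Sat P (Iset P f 1)" unfolding Sat_def by blast
    qed
    show ?thesis
    proof
      fix a assume "a \<in> contract (ideal_pow M t)"
      then have "[:a:] \<in> ideal_pow M t" unfolding contract_def by simp
      then have "[:a:] \<in> Sat P (Iset P f t)" using Mpow_Sat[OF P Msat] by blast
      then show "a \<in> symbolic_power P t" using const_lemma[OF P d f(2) t] by blast
    qed
  qed
  show ?thesis using sub sup unfolding P_def by blast
qed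

lemma sym_primary:
  fixes P :: "'a::idom set"
  assumes P: "prime_ideal P" and t: "t \<ge> 1"
  shows "P_primary P (symbolic_power P t)"
proof -
  have IP: "is_ideal P" by (rule prime_ideal_ideal[OF P])
  have sub: "ideal_pow P t \<subseteq> P" by (rule ideal_pow_sub[OF IP t])
  have rad: "radical (symbolic_power P t) = P"
  proof
    show "radical (symbolic_power P t) \<subseteq> P"
    proof
      fix x assume "x \<in> radical (symbolic_power P t)"
      then obtain n s where "s \<notin> P" "s * x ^ n \<in> ideal_pow P t"
        unfolding radical_def symbolic_power_def by blast
      then have "s * x ^ n \<in> P" using sub by blast
      then have "x ^ n \<in> P" using \<open>s \<notin> P\<close> P unfolding prime_ideal_def by blast
      then show "x \<in> P" using prime_pow[OF P] by blast
    qed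
  next
    show "P \<subseteq> radical (symbolic_power P t)"
    proof
      fix x assume "x \<in> P"
      then have "x ^ t \<in> symbolic_power P t" using pow_in_ideal_pow pow_sub_sym[OF P] by blast
      then show "x \<in> radical (symbolic_power P t)" unfolding radical_def by blast
    qed
  qed
  have "primary_ideal (symbolic_power P t)" unfolding primary_ideal_def
  proof (intro conjI allI impI)
    show "is_ideal (symbolic_power P t)" by (rule sym_ideal[OF P])
    show "symbolic_power P t \<noteq> UNIV"
    proof
      assume "symbolic_power P t = UNIV"
      then obtain s where "s \<notin> P" "s * 1 \<in> ideal_pow P t" unfolding symbolic_power_def by blast
      then show False using sub by auto
    qed
    fix x y assume xy: "x * y \<in> symbolic_power P t"
    show "x \<in> symbolic_power P t \<or> y \<in> radical (symbolic_power P t)"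
    proof (cases "y \<in> P")
      case True then show ?thesis using rad by blast
    next
      case False
      obtain s where "s \<notin> P" "s * (x * y) \<in> ideal_pow P t" using xy unfolding symbolic_power_def by blast
      moreover have "s * (x * y) = (s * y) * x" by (simp add: algebra_simps)
      moreover have "s * y \<notin> P" using prime_mult[OF P \<open>s \<notin> P\<close> False] .
      ultimately have "x \<in> symbolic_power P t" unfolding symbolic_power_def by auto
      then show ?thesis by blast
    qed
  qed
  then show ?thesis unfolding P_primary_def using rad by blast
qed

lemma sym_iff_primary:
  fixes P :: "'a::idom set"
  assumes P: "prime_ideal P" and t: "t \<ge> 1"
  shows "symbolic_power P t = ideal_pow P t \<longleftrightarrow> P_primary P (ideal_pow P t)"
proof
  assume "symbolic_power P t = ideal_pow P t"
  then show "P_primary P (ideal_pow P t)" using sym_primary[OF P t] by simp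
next
  assume pr: "P_primary P (ideal_pow P t)"
  show "symbolic_power P t = ideal_pow P t"
  proof
    show "ideal_pow P t \<subseteq> symbolic_power P t" by (rule pow_sub_sym[OF P])
    show "symbolic_power P t \<subseteq> ideal_pow P t"
    proof
      fix a assume "a \<in> symbolic_power P t"
      then obtain s where s: "s \<notin> P" "s * a \<in> ideal_pow P t" unfolding symbolic_power_def by blast
      have "a * s \<in> ideal_pow P t" using s(2) by (simp add: mult.commute)
      moreover have "s \<notin> radical (ideal_pow P t)" using pr s(1) unfolding P_primary_def by simp
      ultimately show "a \<in> ideal_pow P t" using pr unfolding P_primary_def primary_ideal_def by blast
    qed
  qed
qed

theorem theorem3p7:
  fixes M :: "'a::idom poly set"
  assumes "maximal_ideal M"
  defines "P \<equiv> contract M"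
  shows "(power_stable M \<longleftrightarrow> (\<forall>t\<ge>1. symbolic_power P t = ideal_pow P t))
       \<and> (power_stable M \<longleftrightarrow> (\<forall>t\<ge>1. P_primary P (ideal_pow P t)))"
proof -
  have PS: "power_stable M \<longleftrightarrow> (\<forall>t\<ge>1. symbolic_power P t = ideal_pow P t)"
    unfolding power_stable_def P_def using contract_pow[OF assms(1)] by simp
  have P: "prime_ideal P" unfolding P_def by (rule contract_prime[OF assms(1)])
  show ?thesis using PS sym_iff_primary[OF P] by blast
qed


end
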